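(* Let $\nu$ be a probability measure on $\mathbb R$ with finite moments of all orders, and let $\{P_n\}_{n\ge0}$ be the monic orthogonal polynomials of $\nu$, satisfying $P_0=1$, $P_{-1}=0$ and $P_{n+1}(x)=(x-\alpha_{n+1})P_n(x)-\beta_nP_{n-1}(x)$ for $n\ge0$, with all $\beta_n\ge0$. Let $H(x,z)=\sum_{n\ge0}P_n(x)z^n$. (1) $H(x,z)=\frac{1}{u(z)(f(z)-x)}$ for some $u,f$ such that $u$ and $uf$ are formal power series with $u\in\mathcal P_{0,1}$ and $(uf)(0)=1$ if and only if there exist $\alpha,\alpha',\beta,\beta'$ with $\beta\ge0$, $\beta-\beta'\ge0$ such that $\alpha_n=\alpha-\delta_{n1}\alpha'$ and $\beta_n=\beta-\delta_{n1}\beta'$ for all $n\ge1$. (2) In this case $f=K_\nu\circ u$. (3) In this case, with $Q_n(x)=U_n(x-\alpha,\beta)$, one has $P_0=Q_0$, $P_1=Q_1+\alpha'Q_0$, and $P_n=Q_n+\alpha'Q_{n-1}+\beta'Q_{n-2}$ for $n>1$.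
   Context: $\mathcal P_{0,1}$ denotes formal power series $u(z)$ with $u(0)=0$, $u'(0)=1$. $G_\nu(z)=\sum_{n\ge0}m_n(\nu)z^{-(n+1)}$ is the Cauchy transform of $\nu$ ($m_n$ its moments) and $K_\nu$ its inverse under composition (a series $\frac1z+\sum_{n\ge1}c_nz^{n-1}$). Chebyshev polynomials of the second kind: $U_n(2\cos\theta)=\frac{\sin(n+1)\theta}{\sin\theta}$, $U_n(x,t)=t^{n/2}U_n(x/\sqrt t)$, and $U_n(x-\alpha,\beta)$ means $U_n(\cdot,\beta)$ evaluated at $x-\alpha$; these satisfy $Q_{n+1}=(x-\alpha)Q_n-\beta Q_{n-1}$. *)

theory Defs
  imports "HOL-Probability.Probability" "HOL-Computational_Algebra.Formal_Laurent_Series"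
    "HOL-Computational_Algebra.Polynomial"
begin

definition moment :: "real measure \<Rightarrow> nat \<Rightarrow> real" where
  "moment \<nu> n = (\<integral>x. x ^ n \<partial>\<nu>)"

text \<open>The Cauchy transform G(z) = sum m_n z^(-(n+1)), written in the variable w = 1/z:
  g(w) = G(1/w) = sum m_n w^(n+1), a formal power series with g(0)=0, g'(0)=m_0.\<close>
definition cauchy_fps :: "real measure \<Rightarrow> real fps" where
  "cauchy_fps \<nu> = Abs_fps (\<lambda>n. if n = 0 then 0 else moment \<nu> (n - 1))"

text \<open>K_nu, the inverse of G_nu under composition: if k is the compositional inverse of g,
  then K(z) = 1/k(z) satisfies G(K(z)) = g(k(z)) = z.\<close>
definition K_fls :: "real measure \<Rightarrow> real fls" where
  "K_fls \<nu> = inverse (fps_to_fls (fps_inv (cauchy_fps \<nu>)))"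

text \<open>Composition L o u of a formal Laurent series L = z^d * b(z) (b a power series)
  with a power series u having u(0)=0, u'(0)<>0:  (L o u) = b(u) * u^d.\<close>
definition fls_compose_fps :: "real fls \<Rightarrow> real fps \<Rightarrow> real fls" where
  "fls_compose_fps L u =
     fps_to_fls (fps_compose (fls_base_factor_to_fps L) u) * (fps_to_fls u) powi (fls_subdegree L)"

text \<open>Chebyshev polynomials of the second kind in two variables, U_n(x,t) = t^(n/2) U_n(x/sqrt t),
  as polynomials in x: U_0 = 1, U_1 = x, U_(n+1) = x U_n - t U_(n-1).\<close>
fun cheb_U :: "nat \<Rightarrow> real \<Rightarrow> real poly" where
  "cheb_U 0 t = 1"
| "cheb_U (Suc 0) t = [:0, 1:]"
| "cheb_U (Suc (Suc n)) t = [:0, 1:] * cheb_U (Suc n) t - smult t (cheb_U n t)"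

end

theory Submission
  imports Defs
begin


lemma coeff_lin_mult_Suc: "coeff ([:c::real, 1:] * p) (Suc j) = c * coeff p (Suc j) + coeff p j"
  by (simp add: mult_pCons_left)
lemma coeff_mult_lin_Suc: "coeff (p * [:c::real, d:]) (Suc j) = c * coeff p (Suc j) + d * coeff p j"
  by (simp add: mult.commute[of p] mult_pCons_left)
lemma coeff_mult_lin_0: "coeff (p * [:c::real, d:]) 0 = c * coeff p 0"
  by (simp add: mult.commute[of p] mult_pCons_left)

lemma P_monic:
  fixes P :: "nat \<Rightarrow> real poly"
  assumes P0: "P 0 = 1"
    and P1: "P 1 = [:- \<alpha> 1, 1:]"
    and Prec: "\<And>n. n \<ge> 1 \<Longrightarrow> P (n + 1) = [:- \<alpha> (n + 1), 1:] * P n - smult (\<beta> n) (P (n - 1))"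
  shows "coeff (P n) n = 1 \<and> (\<forall>j>n. coeff (P n) j = 0)"
proof (induction n rule: less_induct)
  case (less n)
  show ?case
  proof (cases n)
    case 0 then show ?thesis using P0 by (auto simp: coeff_1 )
  next
    case (Suc m) note m = this
    show ?thesis
    proof (cases m)
      case 0 then show ?thesis using P1 m by (auto simp: coeff_pCons split: nat.splits)
    next
      case (Suc k)
      have e: "P n = [:- \<alpha> (k+2), 1:] * P (k+1) - smult (\<beta> (k+1)) (P k)"
        using Prec[of "k+1"] m Suc by simp
      have i1: "coeff (P (k+1)) (k+1) = 1 \<and> (\<forall>j>k+1. coeff (P (k+1)) j = 0)"
        using less m Suc by simp
      have i2: "coeff (P k) k = 1 \<and> (\<forall>j>k. coeff (P k) j = 0)"
        using less m Suc by simp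
      have "coeff (P n) n = 1"
        unfolding e using i1 i2 m Suc by (simp add: coeff_lin_mult_Suc)
      moreover have "\<forall>j>n. coeff (P n) j = 0"
      proof (intro allI impI)
        fix j assume "j > n"
        then obtain j' where "j = Suc j'" "j' > k+1" using m Suc by (cases j) auto
        then show "coeff (P n) j = 0" unfolding e using i1 i2 by (simp add: coeff_lin_mult_Suc)
      qed
      ultimately show ?thesis by blast
    qed
  qed
qed

lemma part3:
  fixes P :: "nat \<Rightarrow> real poly"
  assumes P0: "P 0 = 1"
    and P1: "P 1 = [:- \<alpha> 1, 1:]"
    and Prec: "\<And>n. n \<ge> 1 \<Longrightarrow> P (n + 1) = [:- \<alpha> (n + 1), 1:] * P n - smult (\<beta> n) (P (n - 1))"
    and hab: "\<forall>n\<ge>1. \<alpha> n = a - (if n = 1 then a' else 0) \<and> \<beta> n = b - (if n = 1 then b' else 0)"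
  shows "let Q = (\<lambda>n. pcompose (cheb_U n b) [:- a, 1:]) in
            P 0 = Q 0 \<and> P 1 = Q 1 + smult a' (Q 0) \<and>
            (\<forall>n>1. P n = Q n + smult a' (Q (n - 1)) + smult b' (Q (n - 2)))"
proof -
  define X where "X = [:- a, 1:]"
  define Q where "Q = (\<lambda>n. pcompose (cheb_U n b) X)"
  have Q0: "Q 0 = 1" by (simp add: Q_def pcompose_1)
  have Q1: "Q 1 = X" "Q (Suc 0) = X" by (simp_all add: Q_def pcompose_pCons)
  have Qr: "Q (Suc (Suc n)) = X * Q (Suc n) - smult b (Q n)" for n
    by (simp add: Q_def pcompose_diff pcompose_mult pcompose_smult pcompose_pCons)
  have a1: "\<alpha> 1 = a - a'" "\<beta> 1 = b - b'" using hab by auto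
  have a2: "\<alpha> n = a" "\<beta> n = b" if "n \<ge> 2" for n using hab that by auto
  have P1': "P 1 = X + [:a':]" using P1 a1 by (simp add: X_def)
  have Pr: "P (Suc (Suc n)) = X * P (Suc n) - smult b (P n)" if "n \<ge> 1" for n
    using Prec[of "Suc n"] a2[of "Suc (Suc n)"] a2[of "Suc n"] that by (simp add: X_def)
  have P2: "P 2 = X * P 1 - smult (b - b') (P 0)"
    using Prec[of 1] a2[of 2] a1 by (simp add: X_def numeral_2_eq_2)
  define R where "R n = Q n + smult a' (Q (n - 1)) + smult b' (Q (n - 2))" for n
  have R2: "P 2 = R 2"
    unfolding P2 P1' P0 R_def 
    by (intro poly_ext) (simp add: numeral_2_eq_2 algebra_simps Qr Q0 Q1)
  have R3: "P 3 = R 3"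
  proof -
    have "P 3 = X * P 2 - smult b (P 1)" using Pr[of 1] by (simp add: numeral_3_eq_3 numeral_2_eq_2)
    also have "\<dots> = R 3" unfolding R2 P1' R_def 
      by (intro poly_ext) (simp add: numeral_3_eq_3 numeral_2_eq_2 algebra_simps Qr Q0 Q1)
    finally show ?thesis .
  qed
  have main: "P (m+2) = R (m+2) \<and> P (m+3) = R (m+3)" for m
  proof (induction m)
    case 0 then show ?case using R2 R3 by (simp add: numeral_2_eq_2 numeral_3_eq_3)
  next
    case (Suc m)
    have "P (Suc m + 3) = X * P (m+3) - smult b (P (m+2))"
      using Pr[of "m+2"] by (simp add: eval_nat_numeral)
    also have "\<dots> = X * R (m+3) - smult b (R (m+2))"
    proof -
      from Suc.IH have h: "P (m+3) = R (m+3)" "P (m+2) = R (m+2)" by blast+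
      show ?thesis by (simp only: h)
    qed
    also have "\<dots> = R (Suc m + 3)"
      unfolding R_def
      by (intro poly_ext) (simp add: eval_nat_numeral algebra_simps Qr)
    finally have c2: "P (Suc m + 3) = R (Suc m + 3)" .
    have e: "Suc m + 2 = m + 3" by simp
    from Suc.IH have "P (m+3) = R (m+3)" by blast
    then have "P (Suc m + 2) = R (Suc m + 2)" unfolding e .
    then show ?case using c2 by blast
  qed
  have "\<forall>n>1. P n = R n"
  proof (intro allI impI)
    fix n :: nat assume "n > 1"
    then have "n = (n - 2) + 2" by simp
    then show "P n = R n" using main[of "n-2"] by metis
  qed
  moreover have "P 0 = Q 0" "P 1 = Q 1 + smult a' (Q 0)" using P0 Q0 P1' Q1(1) by simp_all
  ultimately have fin: "P 0 = Q 0 \<and> P 1 = Q 1 + smult a' (Q 0) \<and> (\<forall>n>1. P n = Q n + smult a' (Q (n - 1)) + smult b' (Q (n - 2)))"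
    unfolding R_def by blast
  have Qeq: "(\<lambda>n. pcompose (cheb_U n b) [:- a, 1:]) = Q" by (simp add: Q_def X_def)
  show ?thesis unfolding Let_def Qeq by (rule fin)
qed

lemma part1_conv:
  fixes P :: "nat \<Rightarrow> real poly"
  assumes P0: "P 0 = 1"
    and P1: "P 1 = [:- \<alpha> 1, 1:]"
    and Prec: "\<And>n. n \<ge> 1 \<Longrightarrow> P (n + 1) = [:- \<alpha> (n + 1), 1:] * P n - smult (\<beta> n) (P (n - 1))"
    and hab: "\<forall>n\<ge>1. \<alpha> n = a - (if n = 1 then a' else 0) \<and> \<beta> n = b - (if n = 1 then b' else 0)"
  shows "\<exists>u w :: real fps. u $ 0 = 0 \<and> u $ 1 = 1 \<and> w $ 0 = 1 \<and>
         (\<forall>x::real. Abs_fps (\<lambda>n. poly (P n) x) = inverse (w - fps_const x * u))"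
proof -
  have a1: "\<alpha> 1 = a - a'" "\<beta> 1 = b - b'" using hab by auto
  have a2: "\<alpha> n = a" "\<beta> n = b" if "n \<ge> 2" for n using hab that by auto
  define D0 :: "real fps" where "D0 = 1 + fps_const a' * fps_X + fps_const b' * fps_X ^ 2"
  define N0 :: "real fps" where "N0 = 1 + fps_const a * fps_X + fps_const b * fps_X ^ 2"
  define u where "u = fps_X * inverse D0"
  define w where "w = N0 * inverse D0"
  have D00: "D0 $ 0 = 1" by (simp add: D0_def)
  have u0: "u $ 0 = 0" by (simp add: u_def)
  have u1: "u $ 1 = 1" using D00 by (simp add: u_def)
  have w0: "w $ 0 = 1" using D00 by (simp add: w_def N0_def fps_mult_nth)
  have pP1: "poly (P 1) x = x - a + a'" for x using P1 a1 by simp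
  have pP2: "poly (P 2) x = (x - a) * poly (P 1) x - (b - b')" for x
  proof -
    have e2: "P 2 = [:- \<alpha> 2, 1:] * P 1 - smult (\<beta> 1) (P 0)" using Prec[of 1] by (simp add: numeral_2_eq_2)
    have "poly (P 2) x = (x - \<alpha> 2) * poly (P 1) x - \<beta> 1 * poly (P 0) x"
      unfolding e2 by (simp add: algebra_simps)
    then show ?thesis using a1 a2[of 2] P0 by simp
  qed
  have pPr: "poly (P (Suc (Suc (Suc n)))) x = (x - a) * poly (P (Suc (Suc n))) x - b * poly (P (Suc n)) x" for n x
  proof -
    have e2: "P (Suc (Suc n) + 1) = [:- \<alpha> (Suc (Suc n) + 1), 1:] * P (Suc (Suc n)) - smult (\<beta> (Suc (Suc n))) (P (Suc (Suc n) - 1))"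
      using Prec[of "Suc (Suc n)"] by simp
    have "poly (P (Suc (Suc n) + 1)) x = (x - \<alpha> (Suc (Suc n) + 1)) * poly (P (Suc (Suc n))) x - \<beta> (Suc (Suc n)) * poly (P (Suc (Suc n) - 1)) x"
      unfolding e2 by (simp add: algebra_simps)
    then show ?thesis using a2[of "Suc (Suc (Suc n))"] a2[of "Suc (Suc n)"] by simp
  qed
  have "Abs_fps (\<lambda>n. poly (P n) x) = inverse (w - fps_const x * u)" for x
  proof -
    define H where "H = Abs_fps (\<lambda>n. poly (P n) x)"
    define N where "N = N0 - fps_const x * fps_X"
    have N00: "N $ 0 = 1" by (simp add: N_def N0_def)
    have wu: "w - fps_const x * u = N * inverse D0" by (simp add: w_def u_def N_def algebra_simps)
    have HN: "H * N = D0"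
    proof (rule fps_ext)
      fix n
      have e: "H * N = H + fps_const (a - x) * (fps_X * H) + fps_const b * (fps_X ^ 2 * H)"
      proof -
        have c: "fps_const (a - x) = fps_const a - fps_const x" by simp
        show ?thesis unfolding c N_def N0_def by (simp add: algebra_simps del: fps_const_sub)
      qed
      show "(H * N) $ n = D0 $ n"
      proof (cases n)
        case 0 then show ?thesis unfolding e by (simp add: H_def D0_def P0 fps_X_power_mult_nth)
      next
        case (Suc m) note m = this
        show ?thesis
        proof (cases m)
          case 0 then show ?thesis unfolding e using m pP1
            by (simp add: H_def D0_def P0 fps_X_power_mult_nth algebra_simps)
        next
          case (Suc k) note k = this
          show ?thesis
          proof (cases k)
            case 0 then show ?thesis unfolding e using m k pP2[of x] pP1[of x]
              by (simp add: H_def D0_def P0 fps_X_power_mult_nth algebra_simps numeral_2_eq_2)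
          next
            case (Suc j)
            then show ?thesis unfolding e using m k pPr[of j x]
              by (simp add: H_def D0_def fps_X_power_mult_nth algebra_simps)
          qed
        qed
      qed
    qed
    have "inverse (w - fps_const x * u) = inverse N * D0"
      unfolding wu using D00 by (simp add: fps_inverse_mult)
    also have "\<dots> = H"
    proof -
      have inv1: "inverse N * N = 1" using N00 by (intro inverse_mult_eq_1) simp
      show ?thesis unfolding HN[symmetric] by (simp only: mult.left_commute[of "inverse N" H N] inv1 mult_1_right)
    qed
    finally show ?thesis by (simp add: H_def)
  qed
  then show ?thesis using u0 u1 w0 by blast
qed

lemma sum_last3: "(\<Sum>k\<in>{0..m+2}. f k) = (\<Sum>k<m. f k) + f m + f (Suc m) + f (Suc (Suc m))"
  by (simp add: atLeast0AtMost lessThan_Suc_atMost[symmetric])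
lemma sum_last4: "(\<Sum>k\<in>{0..m+3}. f k) = (\<Sum>k<m. f k) + f m + f (Suc m) + f (Suc (Suc m)) + f (Suc (Suc (Suc m)))"
  by (simp add: atLeast0AtMost lessThan_Suc_atMost[symmetric] eval_nat_numeral)

lemma part1_fwd:
  fixes P :: "nat \<Rightarrow> real poly" and u w :: "real fps"
  assumes P0: "P 0 = 1"
    and P1: "P 1 = [:- \<alpha> 1, 1:]"
    and Prec: "\<And>n. n \<ge> 1 \<Longrightarrow> P (n + 1) = [:- \<alpha> (n + 1), 1:] * P n - smult (\<beta> n) (P (n - 1))"
    and beta_nonneg: "\<And>n. n \<ge> 1 \<Longrightarrow> \<beta> n \<ge> 0"
    and u0: "u $ 0 = 0" and u1: "u $ 1 = 1" and w0: "w $ 0 = 1"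
    and hH: "\<forall>x::real. Abs_fps (\<lambda>n. poly (P n) x) = inverse (w - fps_const x * u)"
  shows "\<exists>a a' b b' :: real. b \<ge> 0 \<and> b - b' \<ge> 0 \<and>
         (\<forall>n\<ge>1. \<alpha> n = a - (if n = 1 then a' else 0) \<and> \<beta> n = b - (if n = 1 then b' else 0))"
proof -
  define S where "S n = (\<Sum>k\<in>{0..n}. P k * [:w $ (n - k), - (u $ (n - k)):])" for n
  have S0: "S n = 0" if "n \<ge> 1" for n
  proof (rule poly_ext)
    fix x :: real
    define D where "D = w - fps_const x * u"
    have D0: "D $ 0 = 1" using u0 w0 by (simp add: D_def)
    have Dn: "D $ k = w $ k - x * u $ k" for k by (simp add: D_def)
    have "Abs_fps (\<lambda>n. poly (P n) x) * D = 1"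
      using hH D0 by (simp add: D_def inverse_mult_eq_1)
    then have "(Abs_fps (\<lambda>n. poly (P n) x) * D) $ n = 0" using that by simp
    then have "(\<Sum>k\<in>{0..n}. poly (P k) x * (w $ (n - k) - x * u $ (n - k))) = 0"
      by (simp add: fps_mult_nth Dn)
    then show "poly (S n) x = poly 0 x"
      by (simp add: S_def poly_sum algebra_simps)
  qed
  have coeffS: "coeff (S n) (Suc j) = (\<Sum>k\<in>{0..n}. w $ (n - k) * coeff (P k) (Suc j) - u $ (n - k) * coeff (P k) j)" for n j
    by (simp add: S_def coeff_sum coeff_mult_lin_Suc)
  have mon: "coeff (P k) k = 1" "\<And>j. j > k \<Longrightarrow> coeff (P k) j = 0" for k
    using P_monic[of P \<alpha> \<beta> k, OF P0 P1 Prec] by auto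
  have crec: "coeff (P (Suc (Suc n))) (Suc j) = - \<alpha> (Suc (Suc n)) * coeff (P (Suc n)) (Suc j) + coeff (P (Suc n)) j - \<beta> (Suc n) * coeff (P n) (Suc j)" for n j
  proof -
    have "P (Suc n + 1) = [:- \<alpha> (Suc n + 1), 1:] * P (Suc n) - smult (\<beta> (Suc n)) (P (Suc n - 1))"
      using Prec[of "Suc n"] by simp
    then have "P (Suc (Suc n)) = [:- \<alpha> (Suc (Suc n)), 1:] * P (Suc n) - smult (\<beta> (Suc n)) (P n)" by simp
    then show ?thesis by (simp add: coeff_lin_mult_Suc)
  qed
  have alpha1: "\<alpha> 1 = w $ 1"
  proof -
    have "coeff (S 1) 0 = 0" using S0[of 1] by simp
    then show ?thesis using P0 P1 u0 u1 w0 by (simp add: S_def)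
  qed
  have alphaA: "\<alpha> (Suc (Suc m)) = w $ 1 - u $ 2" for m
  proof -
    have "coeff (S (m+2)) (Suc m) = 0" using S0[of "m+2"] by simp
    then have "(\<Sum>k\<in>{0..m+2}. w $ (m + 2 - k) * coeff (P k) (Suc m) - u $ (m + 2 - k) * coeff (P k) m) = 0"
      by (simp add: coeffS)
    moreover have "(\<Sum>k<m. w $ (m + 2 - k) * coeff (P k) (Suc m) - u $ (m + 2 - k) * coeff (P k) m) = 0"
      by (intro sum.neutral) (auto simp: mon)
    ultimately have e: "- u $ 2 + (w $ 1 - coeff (P (Suc m)) m) + coeff (P (Suc (Suc m))) (Suc m) = 0"
      unfolding sum_last3 using mon[of m] mon[of "Suc m"] u0 u1 w0
      by (simp add: mon numeral_2_eq_2)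
    have r: "coeff (P (Suc (Suc m))) (Suc m) = - \<alpha> (Suc (Suc m)) + coeff (P (Suc m)) m"
      using crec[of m m] mon[of "Suc m"] mon(2)[of m "Suc m"] by simp
    show ?thesis using e r by simp
  qed
  have betaB: "\<beta> (Suc (Suc m)) = w $ 2 - u $ 3 - u $ 2 * (w $ 1 - u $ 2)" for m
  proof -
    have "coeff (S (m+3)) (Suc m) = 0" using S0[of "m+3"] by simp
    then have "(\<Sum>k\<in>{0..m+3}. w $ (m + 3 - k) * coeff (P k) (Suc m) - u $ (m + 3 - k) * coeff (P k) m) = 0"
      by (simp add: coeffS)
    moreover have "(\<Sum>k<m. w $ (m + 3 - k) * coeff (P k) (Suc m) - u $ (m + 3 - k) * coeff (P k) m) = 0"
      by (intro sum.neutral) (auto simp: mon)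
    ultimately have e: "- u $ 3 + (w $ 2 - u $ 2 * coeff (P (Suc m)) m)
        + (w $ 1 * coeff (P (Suc (Suc m))) (Suc m) - coeff (P (Suc (Suc m))) m)
        + coeff (P (Suc (Suc (Suc m)))) (Suc m) = 0"
      unfolding sum_last4 using mon[of m] mon[of "Suc m"] u0 u1 w0
      by (simp add: mon eval_nat_numeral)
    have r1: "coeff (P (Suc (Suc m))) (Suc m) = - \<alpha> (Suc (Suc m)) + coeff (P (Suc m)) m"
      using crec[of m m] mon[of "Suc m"] mon(2)[of m "Suc m"] by simp
    have r2: "coeff (P (Suc (Suc (Suc m)))) (Suc m) = - \<alpha> (Suc (Suc (Suc m))) * coeff (P (Suc (Suc m))) (Suc m) + coeff (P (Suc (Suc m))) m - \<beta> (Suc (Suc m))"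
      using crec[of "Suc m" m] mon[of "Suc m"] by simp
    have a3: "\<alpha> (Suc (Suc (Suc m))) = w $ 1 - u $ 2" using alphaA[of "Suc m"] by simp
    have a2: "\<alpha> (Suc (Suc m)) = w $ 1 - u $ 2" using alphaA[of m] by simp
    from e r2 a3 have "- u $ 3 + w $ 2 - u $ 2 * coeff (P (Suc m)) m + u $ 2 * coeff (P (Suc (Suc m))) (Suc m) - \<beta> (Suc (Suc m)) = 0"
      by (simp add: algebra_simps)
    then show ?thesis using r1 a2 by (simp add: algebra_simps)
  qed
  define a where "a = w $ 1 - u $ 2"
  define a' where "a' = - u $ 2"
  define b where "b = \<beta> 2"
  define b' where "b' = \<beta> 2 - \<beta> 1"
  have "b \<ge> 0" using beta_nonneg[of 2] by (simp add: b_def)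
  moreover have "b - b' \<ge> 0" using beta_nonneg[of 1] by (simp add: b_def b'_def)
  moreover have "\<forall>n\<ge>1. \<alpha> n = a - (if n = 1 then a' else 0) \<and> \<beta> n = b - (if n = 1 then b' else 0)"
  proof (intro allI impI)
    fix n :: nat assume n: "n \<ge> 1"
    show "\<alpha> n = a - (if n = 1 then a' else 0) \<and> \<beta> n = b - (if n = 1 then b' else 0)"
    proof (cases "n = 1")
      case True then show ?thesis using alpha1 by (simp add: a_def a'_def b_def b'_def)
    next
      case False
      then obtain m where m: "n = Suc (Suc m)" using n by (metis Suc_le_D le_antisym not_less_eq_eq One_nat_def Suc_le_eq)
      have "\<beta> 2 = \<beta> (Suc (Suc 0))" by (simp add: numeral_2_eq_2)
      then show ?thesis using m alphaA[of m] betaB[of m] betaB[of 0] by (simp add: a_def b_def)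
    qed
  qed
  ultimately show ?thesis by blast
qed

lemma geom_inv: "inverse (1 - fps_const (x::real) * fps_X) = Abs_fps (\<lambda>n. x ^ n)"
proof (rule fps_inverse_unique)
  show "(1 - fps_const x * fps_X) * Abs_fps (\<lambda>n. x ^ n) = 1"
  proof (rule fps_ext)
    fix n
    show "((1 - fps_const x * fps_X) * Abs_fps (\<lambda>n. x ^ n)) $ n = 1 $ n"
      by (cases n) (simp_all add: algebra_simps mult.assoc)
  qed
qed

lemma int_double_sum:
  fixes \<nu> :: "real measure" and c :: "'a \<Rightarrow> real" and d :: "'a \<Rightarrow> nat \<Rightarrow> real"
  assumes moments: "\<And>n. integrable \<nu> (\<lambda>x. x ^ n)"
  shows "(\<integral>x. (\<Sum>j\<in>A. c j * (\<Sum>i\<in>B j. x ^ i * d j i)) \<partial>\<nu>)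
       = (\<Sum>j\<in>A. c j * (\<Sum>i\<in>B j. moment \<nu> i * d j i))"
proof -
  have ii: "integrable \<nu> (\<lambda>x. x ^ i * d j i)" for i j using moments by simp
  have "(\<integral>x. (\<Sum>j\<in>A. c j * (\<Sum>i\<in>B j. x ^ i * d j i)) \<partial>\<nu>)
      = (\<Sum>j\<in>A. (\<integral>x. c j * (\<Sum>i\<in>B j. x ^ i * d j i) \<partial>\<nu>))"
    by (rule Bochner_Integration.integral_sum) (use ii in auto)
  also have "\<dots> = (\<Sum>j\<in>A. c j * (\<Sum>i\<in>B j. moment \<nu> i * d j i))"
  proof (intro sum.cong refl)
    fix j
    have inner: "(\<integral>x. (\<Sum>i\<in>B j. x ^ i * d j i) \<partial>\<nu>) = (\<Sum>i\<in>B j. moment \<nu> i * d j i)"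
      by (subst Bochner_Integration.integral_sum) (auto simp: moments moment_def)
    show "(\<integral>x. c j * (\<Sum>i\<in>B j. x ^ i * d j i) \<partial>\<nu>) = c j * (\<Sum>i\<in>B j. moment \<nu> i * d j i)"
      by (simp only: integral_mult_right_zero inner)
  qed
  finally show ?thesis .
qed

lemma part2:
  fixes \<nu> :: "real measure" and P :: "nat \<Rightarrow> real poly" and u w :: "real fps"
  assumes prob: "prob_space \<nu>"
    and moments: "\<And>n. integrable \<nu> (\<lambda>x. x ^ n)"
    and orth: "\<And>n m. n \<noteq> m \<Longrightarrow> (\<integral>x. poly (P n) x * poly (P m) x \<partial>\<nu>) = 0"
    and P0: "P 0 = 1"
    and u0: "u $ 0 = 0" and u1: "u $ 1 = 1" and w0: "w $ 0 = 1"
    and hH: "\<forall>x::real. Abs_fps (\<lambda>n. poly (P n) x) = inverse (w - fps_const x * u)"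
  shows "fps_to_fls w / fps_to_fls u = fls_compose_fps (K_fls \<nu>) u"
proof -
  have intP: "(\<integral>x. poly (P k) x \<partial>\<nu>) = (if k = 0 then 1 else 0)" for k
  proof (cases "k = 0")
    case True
    then show ?thesis using P0 prob by (simp add: prob_space.prob_space)
  next
    case False
    then show ?thesis using orth[of k 0] P0 by simp
  qed
  define iw where "iw = inverse w"
  define v where "v = u * iw"
  have wiw: "w * iw = 1" using w0 by (simp add: iw_def inverse_mult_eq_1')
  have v0: "v $ 0 = 0" using u0 by (simp add: v_def fps_mult_nth)
  have wv: "w * v = u" by (metis mult.left_commute mult_1_right v_def wiw)
  define M where "M = Abs_fps (\<lambda>i. moment \<nu> i)"
  have ptw: "poly (P k) x = (\<Sum>j\<in>{0..k}. iw $ j * (\<Sum>i\<in>{0..k-j}. x ^ i * (v ^ i) $ (k - j)))" for k x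
  proof -
    have e1: "w - fps_const x * u = w * ((1 - fps_const x * fps_X) oo v)"
    proof -
      have "(1 - fps_const x * fps_X) oo v = 1 - fps_const x * v"
        using v0 by (simp add: fps_compose_sub_distrib fps_const_mult_apply_left[symmetric])
      then show ?thesis by (simp only:) (simp add: wv[symmetric] algebra_simps)
    qed
    have "inverse (w - fps_const x * u) = iw * inverse ((1 - fps_const x * fps_X) oo v)"
      unfolding e1 by (simp add: fps_inverse_mult iw_def)
    also have "inverse ((1 - fps_const x * fps_X) oo v) = Abs_fps (\<lambda>n. x ^ n) oo v"
      using v0 by (simp add: fps_inverse_compose[symmetric] geom_inv)
    finally have "Abs_fps (\<lambda>n. poly (P n) x) = iw * (Abs_fps (\<lambda>n. x ^ n) oo v)"
      using hH by simp
    then have "poly (P k) x = (iw * (Abs_fps (\<lambda>n. x ^ n) oo v)) $ k"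
      by (metis fps_nth_Abs_fps)
    then show ?thesis by (simp add: fps_mult_nth fps_compose_nth)
  qed
  have Mv: "(M oo v) = w"
  proof -
    have "iw * (M oo v) = 1"
    proof (rule fps_ext)
      fix k
      have "(iw * (M oo v)) $ k = (\<Sum>j\<in>{0..k}. iw $ j * (\<Sum>i\<in>{0..k-j}. moment \<nu> i * (v ^ i) $ (k - j)))"
        by (simp add: fps_mult_nth fps_compose_nth M_def)
      also have "\<dots> = (\<integral>x. poly (P k) x \<partial>\<nu>)"
        unfolding ptw by (rule int_double_sum[symmetric, OF moments])
      also have "\<dots> = 1 $ k" by (simp add: intP)
      finally show "(iw * (M oo v)) $ k = 1 $ k" .
    qed
    then have "w * (iw * (M oo v)) = w" by simp
    then show ?thesis by (simp add: mult.assoc[symmetric] wiw)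
  qed
  define g where "g = cauchy_fps \<nu>"
  have gXM: "g = fps_X * M"
    by (rule fps_ext) (simp add: g_def cauchy_fps_def M_def)
  have g0: "g $ 0 = 0" by (simp add: gXM)
  have g1: "g $ 1 = 1"
    using prob by (simp add: gXM M_def moment_def prob_space.prob_space)
  have gv: "g oo v = u"
  proof -
    have "g oo v = (fps_X oo v) * (M oo v)" unfolding gXM using v0 by (simp add: fps_compose_mult_distrib)
    also have "\<dots> = v * w" using v0 Mv by simp
    finally show ?thesis using wv by (simp only: mult.commute)
  qed
  define k where "k = fps_inv g"
  have k0: "k $ 0 = 0" by (simp add: k_def fps_inv_def)
  have k1: "k $ 1 = 1" using g1 by (simp add: k_def fps_inv_def)
  have ku: "k oo u = v"
  proof -
    have "k oo u = k oo (g oo v)" by (simp add: gv)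
    also have "\<dots> = (k oo g) oo v" using v0 g0 by (simp add: fps_compose_assoc)
    also have "\<dots> = v" using fps_inv[OF g0] g1 v0 by (simp add: k_def)
    finally show ?thesis .
  qed
  define f where "f = fps_shift 1 k"
  have kf: "k = fps_X * f"
    by (rule fps_ext) (simp add: f_def k0)
  have f0: "f $ 0 = 1" using k1 by (simp add: f_def)
  have u_nz: "u \<noteq> 0" using u1 by auto
  have fu: "f oo u = iw"
  proof -
    have "u * (f oo u) = k oo u" unfolding kf using u0 by (simp add: fps_compose_mult_distrib)
    also have "\<dots> = u * iw" by (simp add: ku v_def)
    finally show ?thesis using u_nz by simp
  qed
  define K where "K = K_fls \<nu>"
  have KK: "K = inverse (fps_to_fls k)" by (simp add: K_def K_fls_def k_def g_def)
  have k_nz: "k \<noteq> 0" using k1 by auto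
  have subk: "subdegree k = 1"
    by (rule subdegreeI) (use k0 k1 in auto)
  have sK: "fls_subdegree K = -1"
    by (simp add: KK fls_subdegree_fls_to_fps subk)
  have ufk: "unit_factor k = f" by (simp add: subk f_def)
  have "K * fps_to_fls k = 1" using k_nz by (simp add: KK)
  then have "fls_base_factor_to_fps K * fls_base_factor_to_fps (fps_to_fls k) = 1"
    using fls_base_factor_to_fps_mult[of K "fps_to_fls k"] fls_base_factor_to_fps_one by simp
  then have "fls_base_factor_to_fps K * f = 1"
    by (simp only: fls_base_factor_to_fps_to_fls ufk)
  then have "f * fls_base_factor_to_fps K = 1" by (simp only: mult.commute)
  then have bK: "fls_base_factor_to_fps K = inverse f"
    by (rule fps_inverse_unique[symmetric])
  have bKu: "fls_base_factor_to_fps K oo u = w"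
    unfolding bK using u0 f0 w0 by (simp add: fps_inverse_compose fu iw_def)
  show ?thesis
    unfolding K_def[symmetric] Defs.fls_compose_fps_def bKu sK
    by (simp add: power_int_minus divide_inverse)
qed

theorem lemma3p1:
  fixes \<nu> :: "real measure"
    and P :: "nat \<Rightarrow> real poly"
    and \<alpha> \<beta> :: "nat \<Rightarrow> real"
  assumes prob: "prob_space \<nu>"
    and borel: "sets \<nu> = sets borel"
    and moments: "\<And>n. integrable \<nu> (\<lambda>x. x ^ n)"
    and orth: "\<And>n m. n \<noteq> m \<Longrightarrow> (\<integral>x. poly (P n) x * poly (P m) x \<partial>\<nu>) = 0"
    and P0: "P 0 = 1"
    and P1: "P 1 = [:- \<alpha> 1, 1:]"
    and Prec: "\<And>n. n \<ge> 1 \<Longrightarrow> P (n + 1) = [:- \<alpha> (n + 1), 1:] * P n - smult (\<beta> n) (P (n - 1))"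
    and beta_nonneg: "\<And>n. n \<ge> 1 \<Longrightarrow> \<beta> n \<ge> 0"
  shows
    "((\<exists>u w :: real fps. u $ 0 = 0 \<and> u $ 1 = 1 \<and> w $ 0 = 1 \<and>
         (\<forall>x::real. Abs_fps (\<lambda>n. poly (P n) x) = inverse (w - fps_const x * u)))
      \<longleftrightarrow>
      (\<exists>a a' b b' :: real. b \<ge> 0 \<and> b - b' \<ge> 0 \<and>
         (\<forall>n\<ge>1. \<alpha> n = a - (if n = 1 then a' else 0) \<and> \<beta> n = b - (if n = 1 then b' else 0))))
    \<and>
    (\<forall>u w :: real fps. u $ 0 = 0 \<and> u $ 1 = 1 \<and> w $ 0 = 1 \<and>
         (\<forall>x::real. Abs_fps (\<lambda>n. poly (P n) x) = inverse (w - fps_const x * u))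
       \<longrightarrow> fps_to_fls w / fps_to_fls u = fls_compose_fps (K_fls \<nu>) u)
    \<and>
    (\<forall>a a' b b' :: real. b \<ge> 0 \<and> b - b' \<ge> 0 \<and>
         (\<forall>n\<ge>1. \<alpha> n = a - (if n = 1 then a' else 0) \<and> \<beta> n = b - (if n = 1 then b' else 0))
       \<longrightarrow> (let Q = (\<lambda>n. pcompose (cheb_U n b) [:- a, 1:]) in
            P 0 = Q 0 \<and> P 1 = Q 1 + smult a' (Q 0) \<and>
            (\<forall>n>1. P n = Q n + smult a' (Q (n - 1)) + smult b' (Q (n - 2)))))"
proof -
  have c1: "(\<exists>u w :: real fps. u $ 0 = 0 \<and> u $ 1 = 1 \<and> w $ 0 = 1 \<and>
         (\<forall>x::real. Abs_fps (\<lambda>n. poly (P n) x) = inverse (w - fps_const x * u)))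
      \<longleftrightarrow>
      (\<exists>a a' b b' :: real. b \<ge> 0 \<and> b - b' \<ge> 0 \<and>
         (\<forall>n\<ge>1. \<alpha> n = a - (if n = 1 then a' else 0) \<and> \<beta> n = b - (if n = 1 then b' else 0)))"
  proof
    assume "\<exists>u w :: real fps. u $ 0 = 0 \<and> u $ 1 = 1 \<and> w $ 0 = 1 \<and>
         (\<forall>x::real. Abs_fps (\<lambda>n. poly (P n) x) = inverse (w - fps_const x * u))"
    then obtain u w :: "real fps" where uw: "u $ 0 = 0" "u $ 1 = 1" "w $ 0 = 1"
      "\<forall>x::real. Abs_fps (\<lambda>n. poly (P n) x) = inverse (w - fps_const x * u)" by blast
    show "\<exists>a a' b b' :: real. b \<ge> 0 \<and> b - b' \<ge> 0 \<and>
         (\<forall>n\<ge>1. \<alpha> n = a - (if n = 1 then a' else 0) \<and> \<beta> n = b - (if n = 1 then b' else 0))"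
      by (rule part1_fwd[OF P0 P1 Prec beta_nonneg uw])
  next
    assume "\<exists>a a' b b' :: real. b \<ge> 0 \<and> b - b' \<ge> 0 \<and>
         (\<forall>n\<ge>1. \<alpha> n = a - (if n = 1 then a' else 0) \<and> \<beta> n = b - (if n = 1 then b' else 0))"
    then obtain a a' b b' :: real where hab:
      "\<forall>n\<ge>1. \<alpha> n = a - (if n = 1 then a' else 0) \<and> \<beta> n = b - (if n = 1 then b' else 0)" by blast
    show "\<exists>u w :: real fps. u $ 0 = 0 \<and> u $ 1 = 1 \<and> w $ 0 = 1 \<and>
         (\<forall>x::real. Abs_fps (\<lambda>n. poly (P n) x) = inverse (w - fps_const x * u))"
      by (rule part1_conv[OF P0 P1 Prec hab])
  qed
  have c2: "\<forall>u w :: real fps. u $ 0 = 0 \<and> u $ 1 = 1 \<and> w $ 0 = 1 \<and>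
         (\<forall>x::real. Abs_fps (\<lambda>n. poly (P n) x) = inverse (w - fps_const x * u))
       \<longrightarrow> fps_to_fls w / fps_to_fls u = fls_compose_fps (K_fls \<nu>) u"
    using part2[of \<nu> P, OF prob moments orth P0] by blast
  have c3: "\<forall>a a' b b' :: real. b \<ge> 0 \<and> b - b' \<ge> 0 \<and>
         (\<forall>n\<ge>1. \<alpha> n = a - (if n = 1 then a' else 0) \<and> \<beta> n = b - (if n = 1 then b' else 0))
       \<longrightarrow> (let Q = (\<lambda>n. pcompose (cheb_U n b) [:- a, 1:]) in
            P 0 = Q 0 \<and> P 1 = Q 1 + smult a' (Q 0) \<and>
            (\<forall>n>1. P n = Q n + smult a' (Q (n - 1)) + smult b' (Q (n - 2))))"
    using part3[OF P0 P1 Prec] by blast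
  show ?thesis using c1 c2 c3 by blast
qed

end
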